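(* Suppose that for every complement critical graph $G$ on $n$ vertices one has ${\rm mvr}(G)+{\rm mvr}(\overline{G})\le n+2$. Then for every simple graph $G$ on $n$ vertices, ${\rm mvr}(G)+{\rm mvr}(\overline{G})\le n+2$, and consequently also ${\rm mr}_+(G)+{\rm mr}_+(\overline{G})\le n+2$ and ${\rm mr}(G)+{\rm mr}(\overline{G})\le n+2$ for every simple graph $G$ on $n$ vertices.
   Context: All graphs are finite and simple with nonempty vertex set; $\overline{G}$ denotes the complement of $G$ and $|G|$ its number of vertices. An orthogonal vector representation of a graph $G=(V,E)$ in $\mathbb{R}^d$ is a map $\phi:V\to\mathbb{R}^d$ with $\phi(v)\neq 0$ for all $v$, and for distinct $u,v$: $\langle\phi(u),\phi(v)\rangle=0$ if and only if $uv\notin E$. The minimum vector rank ${\rm mvr}(G)$ is the smallest $d$ for which such a representation exists. For a graph $G$ on vertices $1,\dots,n$, ${\rm mr}(G)$ is the minimum rank of an $n\times n$ Hermitian matrix $M$ with $M_{ij}\neq 0$ (for $i\neq j$) if and only if $ij$ is an edge; ${\rm mr}_+(G)$ is the same minimum taken over positive semidefinite such $M$. A graph $G$ is complement critical if for every proper induced subgraph $H$ of $G$ (with nonempty vertex set), ${\rm mvr}(H)+{\rm mvr}(\overline{H})<{\rm mvr}(G)+{\rm mvr}(\overline{G})$. *)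

theory Defs
  imports "HOL-Analysis.Analysis" "Jordan_Normal_Form.DL_Rank"
begin

definition simple_graph :: "nat set \<Rightarrow> (nat \<Rightarrow> nat \<Rightarrow> bool) \<Rightarrow> bool" where
  "simple_graph V E \<longleftrightarrow> finite V \<and> V \<noteq> {} \<and>
     (\<forall>u v. E u v \<longrightarrow> u \<in> V \<and> v \<in> V \<and> u \<noteq> v \<and> E v u)"

definition compl_graph :: "nat set \<Rightarrow> (nat \<Rightarrow> nat \<Rightarrow> bool) \<Rightarrow> nat \<Rightarrow> nat \<Rightarrow> bool" where
  "compl_graph V E u v \<longleftrightarrow> u \<in> V \<and> v \<in> V \<and> u \<noteq> v \<and> \<not> E u v"

definition induced :: "nat set \<Rightarrow> (nat \<Rightarrow> nat \<Rightarrow> bool) \<Rightarrow> nat \<Rightarrow> nat \<Rightarrow> bool" where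
  "induced S E u v \<longleftrightarrow> u \<in> S \<and> v \<in> S \<and> E u v"

text \<open>Orthogonal vector representation in R^d; vectors are functions nat => real,
only coordinates below d are used.\<close>
definition ortho_rep :: "nat set \<Rightarrow> (nat \<Rightarrow> nat \<Rightarrow> bool) \<Rightarrow> nat \<Rightarrow> (nat \<Rightarrow> nat \<Rightarrow> real) \<Rightarrow> bool" where
  "ortho_rep V E d \<phi> \<longleftrightarrow>
     (\<forall>v\<in>V. \<exists>i<d. \<phi> v i \<noteq> 0) \<and>
     (\<forall>u\<in>V. \<forall>v\<in>V. u \<noteq> v \<longrightarrow> ((\<Sum>i<d. \<phi> u i * \<phi> v i) = 0 \<longleftrightarrow> \<not> E u v))"

definition mvr :: "nat set \<Rightarrow> (nat \<Rightarrow> nat \<Rightarrow> bool) \<Rightarrow> nat" where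
  "mvr V E = (LEAST d. \<exists>\<phi>. ortho_rep V E d \<phi>)"

definition complement_critical :: "nat set \<Rightarrow> (nat \<Rightarrow> nat \<Rightarrow> bool) \<Rightarrow> bool" where
  "complement_critical V E \<longleftrightarrow>
     (\<forall>S. S \<subset> V \<and> S \<noteq> {} \<longrightarrow>
        mvr S (induced S E) + mvr S (compl_graph S (induced S E)) < mvr V E + mvr V (compl_graph V E))"

definition hermitian_mat :: "complex mat \<Rightarrow> bool" where
  "hermitian_mat M \<longleftrightarrow> (\<forall>i<dim_row M. \<forall>j<dim_row M. M $$ (i,j) = cnj (M $$ (j,i)))"

definition psd_mat :: "complex mat \<Rightarrow> bool" where
  "psd_mat M \<longleftrightarrow> hermitian_mat M \<and>
     (\<forall>x \<in> carrier_vec (dim_row M). 0 \<le> Re (conjugate x \<bullet> (M *\<^sub>v x)))"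

definition fits_graph :: "nat \<Rightarrow> (nat \<Rightarrow> nat \<Rightarrow> bool) \<Rightarrow> complex mat \<Rightarrow> bool" where
  "fits_graph n E M \<longleftrightarrow> M \<in> carrier_mat n n \<and>
     (\<forall>i<n. \<forall>j<n. i \<noteq> j \<longrightarrow> (M $$ (i,j) \<noteq> 0 \<longleftrightarrow> E i j))"

definition mr :: "nat \<Rightarrow> (nat \<Rightarrow> nat \<Rightarrow> bool) \<Rightarrow> nat" where
  "mr n E = (LEAST r. \<exists>M. fits_graph n E M \<and> hermitian_mat M \<and> vec_space.rank n M = r)"

definition mr_plus :: "nat \<Rightarrow> (nat \<Rightarrow> nat \<Rightarrow> bool) \<Rightarrow> nat" where
  "mr_plus n E = (LEAST r. \<exists>M. fits_graph n E M \<and> psd_mat M \<and> vec_space.rank n M = r)"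

end

theory Submission
  imports Defs
begin


definition Gm :: "nat \<Rightarrow> (nat \<Rightarrow> nat \<Rightarrow> real) \<Rightarrow> nat \<Rightarrow> complex mat" where
  "Gm n \<phi> k = mat n n (\<lambda>(u,v). \<Sum>i<k. complex_of_real (\<phi> u i) * complex_of_real (\<phi> v i))"

lemma Gm_carrier: "Gm n \<phi> k \<in> carrier_mat n n" unfolding Gm_def by simp

lemma Gm_rank: "vec_space.rank n (Gm n \<phi> k) \<le> k"
proof (induction k)
  case 0
  have "Gm n \<phi> 0 = 0\<^sub>m n n" unfolding Gm_def by (rule eq_matI) auto
  then show ?case by (simp add: vec_space.rank_0I)
next
  case (Suc k)
  define R where "R = mat n n (\<lambda>(u,v). complex_of_real (\<phi> u k) * complex_of_real (\<phi> v k))"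
  have R: "R \<in> carrier_mat n n" unfolding R_def by simp
  have eq: "Gm n \<phi> (Suc k) = Gm n \<phi> k + R"
    unfolding Gm_def R_def by (rule eq_matI) auto
  have "vec_space.rank n R \<le> 1"
    by (rule vec_space.rank_le_1_product_entries[OF R, of "\<lambda>u. complex_of_real (\<phi> u k)" "\<lambda>v. complex_of_real (\<phi> v k)"])
       (auto simp: R_def)
  moreover have "vec_space.rank n (Gm n \<phi> k + R) \<le> vec_space.rank n (Gm n \<phi> k) + vec_space.rank n R"
    by (rule vec_space.rank_subadditive[OF Gm_carrier R])
  ultimately show ?case using Suc eq by simp
qed

lemma Gm_herm: "hermitian_mat (Gm n \<phi> k)"
  unfolding hermitian_mat_def Gm_def by (auto simp: mult.commute)

lemma Gm_psd: "psd_mat (Gm n \<phi> k)"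
  unfolding psd_mat_def
proof (intro conjI Gm_herm ballI)
  fix x :: "complex vec" assume x: "x \<in> carrier_vec (dim_row (Gm n \<phi> k))"
  hence dx: "dim_vec x = n" by (simp add: Gm_def)
  define a where "a = (\<lambda>u i. complex_of_real (\<phi> u i))"
  define s where "s = (\<lambda>i. \<Sum>v<n. a v i * x $ v)"
  have "conjugate x \<bullet> (Gm n \<phi> k *\<^sub>v x) = (\<Sum>u<n. cnj (x $ u) * (\<Sum>v<n. (\<Sum>i<k. a u i * a v i) * x $ v))"
    unfolding scalar_prod_def using dx
    by (auto simp: Gm_def a_def mult_mat_vec_def scalar_prod_def atLeast0LessThan intro!: sum.cong)
  also have "\<dots> = (\<Sum>u<n. \<Sum>v<n. \<Sum>i<k. cnj (x $ u) * a u i * (a v i * x $ v))"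
    by (simp add: sum_distrib_left sum_distrib_right mult.assoc mult.left_commute)
  also have "\<dots> = (\<Sum>i<k. \<Sum>u<n. \<Sum>v<n. cnj (x $ u) * a u i * (a v i * x $ v))"
    by (simp add: sum.swap[of _ "{..<k}"])
  also have "\<dots> = (\<Sum>i<k. cnj (s i) * s i)"
    unfolding s_def by (simp add: a_def sum_distrib_left sum_distrib_right mult.commute mult.left_commute)
  also have "\<dots> = (\<Sum>i<k. complex_of_real ((cmod (s i))\<^sup>2))"
    by (rule sum.cong[OF refl]) (subst complex_norm_square, rule mult.commute)
  finally have "conjugate x \<bullet> (Gm n \<phi> k *\<^sub>v x) = (\<Sum>i<k. complex_of_real ((cmod (s i))\<^sup>2))" .
  then show "0 \<le> Re (conjugate x \<bullet> (Gm n \<phi> k *\<^sub>v x))" by (simp only: Re_sum Re_complex_of_real) (simp add: sum_nonneg)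
qed



lemma compl_simple: "simple_graph V E \<Longrightarrow> simple_graph V (compl_graph V E)"
  unfolding simple_graph_def compl_graph_def by auto

lemma induced_simple: "simple_graph V E \<Longrightarrow> S \<subseteq> V \<Longrightarrow> S \<noteq> {} \<Longrightarrow> simple_graph S (induced S E)"
  unfolding simple_graph_def induced_def by (auto intro: finite_subset)

lemma rep_exists:
  assumes G: "simple_graph V E"
  shows "\<exists>d \<phi>. ortho_rep V E d \<phi>"
proof -
  have fin: "finite V" and sym: "\<And>u v. E u v \<Longrightarrow> E v u" and irr: "\<And>u v. E u v \<Longrightarrow> u \<noteq> v"
    using G unfolding simple_graph_def by auto
  define N where "N = Suc (Max V)"
  have VN: "\<And>v. v \<in> V \<Longrightarrow> v < N" unfolding N_def using fin by (simp add: le_imp_less_Suc)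
  define d where "d = N + N * N"
  define \<phi> where "\<phi> = (\<lambda>v i. if i < N then (if i = v then 1 else 0) else
     (if E ((i-N) div N) ((i-N) mod N) \<and> (i-N) div N < (i-N) mod N \<and>
         (v = (i-N) div N \<or> v = (i-N) mod N) then 1 else (0::real)))"
  have nz: "\<exists>i<d. \<phi> v i \<noteq> 0" if "v \<in> V" for v
    using VN[OF that] by (intro exI[of _ v]) (auto simp: d_def \<phi>_def)
  have inner: "(\<Sum>i<d. \<phi> u i * \<phi> v i) = (if E u v then 1 else 0)"
    if u: "u \<in> V" and v: "v \<in> V" and uv: "u \<noteq> v" for u v
  proof -
    define p where "p = N + min u v * N + max u v"
    have mN: "min u v < N" "max u v < N" using VN u v by (auto simp: min_def max_def)
    have pd: "p < d" unfolding p_def d_def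
    proof -
      have "min u v * N + max u v < (min u v + 1) * N" using mN by simp
      also have "\<dots> \<le> N * N" using mult_le_mono1[of "Suc (min u v)" N N] mN by simp
      finally show "N + min u v * N + max u v < N + N * N" by simp
    qed
    have pt: "\<phi> u i * \<phi> v i = (if i = p \<and> E u v then 1 else 0)" for i
    proof (cases "i < N")
      case True then show ?thesis using uv by (auto simp: \<phi>_def p_def)
    next
      case False
      define j where "j = i - N"
      have ij: "i = N + j" using False j_def by simp
      have N0: "N > 0" unfolding N_def by simp
      have jd: "j = (j div N) * N + j mod N" by simp
      have pj: "i = p \<longleftrightarrow> j div N = min u v \<and> j mod N = max u v"
      proof
        assume "i = p"
        hence "j = min u v * N + max u v" using ij p_def by simp
        thus "j div N = min u v \<and> j mod N = max u v" using mN by simp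
      next
        assume "j div N = min u v \<and> j mod N = max u v"
        thus "i = p" using ij p_def jd by (metis add.assoc)
      qed
      show ?thesis
        using False uv sym
        unfolding \<phi>_def pj[unfolded j_def]
        by (auto simp: min_def max_def)
    qed
    have "(\<Sum>i<d. \<phi> u i * \<phi> v i) = (\<Sum>i<d. if i = p then (if E u v then 1 else 0) else 0)"
      by (rule sum.cong) (auto simp: pt)
    also have "\<dots> = (if E u v then 1 else 0)" using pd by (simp add: sum.delta)
    finally show ?thesis .
  qed
  have "ortho_rep V E d \<phi>"
    unfolding ortho_rep_def using nz inner by auto
  thus ?thesis by blast
qed

lemma mr_plus_le_mvr:
  assumes G: "simple_graph {0..<n} E"
  shows "mr n E \<le> mr_plus n E \<and> mr_plus n E \<le> mvr {0..<n} E"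
proof -
  obtain d0 \<phi>0 where "ortho_rep {0..<n} E d0 \<phi>0" using rep_exists[OF G] by blast
  hence "\<exists>\<phi>. ortho_rep {0..<n} E (mvr {0..<n} E) \<phi>"
    unfolding mvr_def using LeastI[where P="\<lambda>d. \<exists>\<phi>. ortho_rep {0..<n} E d \<phi>" and k=d0] by blast
  then obtain \<phi> where rep: "ortho_rep {0..<n} E (mvr {0..<n} E) \<phi>" by blast
  define d where "d = mvr {0..<n} E"
  define M where "M = Gm n \<phi> d"
  have fits: "fits_graph n E M"
    unfolding fits_graph_def
  proof (intro conjI allI impI)
    show "M \<in> carrier_mat n n" unfolding M_def by (rule Gm_carrier)
    fix i j assume ij: "i < n" "j < n" "i \<noteq> j"
    have "M $$ (i,j) = complex_of_real (\<Sum>k<d. \<phi> i k * \<phi> j k)"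
      using ij unfolding M_def Gm_def by simp
    moreover have "(\<Sum>k<d. \<phi> i k * \<phi> j k) = 0 \<longleftrightarrow> \<not> E i j"
      using rep ij unfolding ortho_rep_def d_def by auto
    ultimately show "M $$ (i,j) \<noteq> 0 \<longleftrightarrow> E i j" by (metis of_real_eq_0_iff)
  qed
  have psd: "psd_mat M" unfolding M_def by (rule Gm_psd)
  have rk: "vec_space.rank n M \<le> d" unfolding M_def by (rule Gm_rank)
  have ex: "\<exists>M. fits_graph n E M \<and> psd_mat M \<and> vec_space.rank n M = vec_space.rank n M" using fits psd by blast
  have "mr_plus n E \<le> vec_space.rank n M"
    unfolding mr_plus_def by (rule Least_le) (use fits psd in blast)
  hence le2: "mr_plus n E \<le> mvr {0..<n} E" using rk d_def by simp
  have "\<exists>M. fits_graph n E M \<and> psd_mat M \<and> vec_space.rank n M = mr_plus n E"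
    unfolding mr_plus_def by (rule LeastI_ex) (use fits psd in blast)
  then obtain M' where M': "fits_graph n E M'" "psd_mat M'" "vec_space.rank n M' = mr_plus n E" by blast
  have "mr n E \<le> mr_plus n E"
    unfolding mr_def by (rule Least_le) (use M' in \<open>auto simp: psd_mat_def\<close>)
  with le2 show ?thesis by simp
qed

lemma part1:
  assumes crit: "\<And>V E. simple_graph V E \<Longrightarrow> complement_critical V E \<Longrightarrow>
                    mvr V E + mvr V (compl_graph V E) \<le> card V + 2"
  shows "simple_graph V E \<Longrightarrow> mvr V E + mvr V (compl_graph V E) \<le> card V + 2"
proof (induction "card V" arbitrary: V E rule: less_induct)
  case less
  show ?case
  proof (cases "complement_critical V E")
    case True then show ?thesis using crit less.prems by blast
  next
    case False
    then obtain S where S: "S \<subset> V" "S \<noteq> {}"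
      and ge: "mvr V E + mvr V (compl_graph V E) \<le> mvr S (induced S E) + mvr S (compl_graph S (induced S E))"
      unfolding complement_critical_def by (auto simp: not_less)
    have fin: "finite V" using less.prems simple_graph_def by blast
    have cS: "card S < card V" using S fin by (simp add: psubset_card_mono)
    have "simple_graph S (induced S E)" using induced_simple[OF less.prems] S by auto
    from less.hyps[OF cS this] ge cS show ?thesis by simp
  qed
qed


theorem proposition3p4:
  assumes crit: "\<And>V E. simple_graph V E \<Longrightarrow> complement_critical V E \<Longrightarrow>
                    mvr V E + mvr V (compl_graph V E) \<le> card V + 2"
  shows "(\<forall>V E. simple_graph V E \<longrightarrow> mvr V E + mvr V (compl_graph V E) \<le> card V + 2) \<and>
         (\<forall>n E. simple_graph {0..<n} E \<longrightarrow> mr_plus n E + mr_plus n (compl_graph {0..<n} E) \<le> n + 2) \<and>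
         (\<forall>n E. simple_graph {0..<n} E \<longrightarrow> mr n E + mr n (compl_graph {0..<n} E) \<le> n + 2)"
proof -
  have P1: "\<And>V E. simple_graph V E \<Longrightarrow> mvr V E + mvr V (compl_graph V E) \<le> card V + 2"
    using part1[OF crit] by blast
  have P2: "mr_plus n E + mr_plus n (compl_graph {0..<n} E) \<le> n + 2 \<and>
            mr n E + mr n (compl_graph {0..<n} E) \<le> n + 2" if G: "simple_graph {0..<n} E" for n E
  proof -
    have a: "mr n E \<le> mr_plus n E \<and> mr_plus n E \<le> mvr {0..<n} E" by (rule mr_plus_le_mvr[OF G])
    have b: "mr n (compl_graph {0..<n} E) \<le> mr_plus n (compl_graph {0..<n} E) \<and>
             mr_plus n (compl_graph {0..<n} E) \<le> mvr {0..<n} (compl_graph {0..<n} E)"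
      by (rule mr_plus_le_mvr[OF compl_simple[OF G]])
    have c: "mvr {0..<n} E + mvr {0..<n} (compl_graph {0..<n} E) \<le> n + 2" using P1[OF G] by simp
    show ?thesis using a b c by linarith
  qed
  show ?thesis using P1 P2 by blast
qed

end
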